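(* Let $M\subset\mathbb{R}^{2d}$ satisfy the standing assumptions below. There exist constants $C,\delta>0$, depending only on $M$, such that for all $x$ with $|x|\ge\frac1\delta$, writing $y=T(x)$, one has $$|n_-(x)-m_-(x)|\le\frac{C}{|x|},\qquad |m_-(y)-n_-(y)|\le\frac{C}{|x|},\qquad |n_-(y)-n_+(x)|\le\frac{C}{|x|}.$$
   Context: $\mathbb{R}^{2d}$ carries its standard inner product, norm $|\cdot|$, complex structure $J$ and symplectic form $\omega(u,v)=\langle Ju,v\rangle$. Standing assumptions: $M$ is a smooth closed hypersurface bounding a strictly convex domain containing the origin in its interior, and $M$ is a level set of a smooth function with positive definite Hessian. For $q\in M$ the Reeb vector $R(q)$ is the unique vector with $\omega(v,R(q))=0$ for all $v\in T_qM$ and $\omega(q,R(q))=1$. Write $a\sim b$ if $a=\lambda b$, $\lambda>0$. For $x$ in the exterior of $M$: $m_-(x)\in M$ is the unique point with $m_-(x)-x\sim R(m_-(x))$; $T(x)=2m_-(x)-x$ is the outer symplectic billiard map; $n_+(x),n_-(x)\in M$ are the unique points with $R(n_+(x))\sim x$ and $R(n_-(x))\sim -x$. *)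

theory Defs
  imports "HOL-Analysis.Analysis"
begin

text \<open>The space R^{2d} is modelled as real^'n \<times> real^'n (d = CARD('n)), with
  the product inner product; points are (q, p).\<close>

type_synonym 'n sp = "(real^'n) \<times> (real^'n)"

definition cJ :: "'n::finite sp \<Rightarrow> 'n sp" where
  "cJ z = (- snd z, fst z)"

definition omega :: "'n::finite sp \<Rightarrow> 'n sp \<Rightarrow> real" where
  "omega u v = inner (cJ u) v"

fun Ck :: "nat \<Rightarrow> ('a::euclidean_space \<Rightarrow> real) \<Rightarrow> bool" where
  "Ck 0 f = continuous_on UNIV f"
| "Ck (Suc k) f = (continuous_on UNIV f \<and> (\<forall>x. f differentiable (at x)) \<and>
      (\<forall>v. Ck k (\<lambda>x. frechet_derivative f (at x) v)))"

definition smooth :: "('a::euclidean_space \<Rightarrow> real) \<Rightarrow> bool" where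
  "smooth f = (\<forall>k. Ck k f)"

definition pos_def_hessian :: "('a::euclidean_space \<Rightarrow> real) \<Rightarrow> bool" where
  "pos_def_hessian F = (\<forall>x h. h \<noteq> 0 \<longrightarrow>
      frechet_derivative (\<lambda>y. frechet_derivative F (at y) h) (at x) h > 0)"

definition tangent_space :: "('n::finite sp \<Rightarrow> real) \<Rightarrow> 'n sp \<Rightarrow> 'n sp set" where
  "tangent_space F q = {v. frechet_derivative F (at q) v = 0}"

definition reeb :: "('n::finite sp \<Rightarrow> real) \<Rightarrow> 'n sp \<Rightarrow> 'n sp" where
  "reeb F q = (THE r. (\<forall>v\<in>tangent_space F q. omega v r = 0) \<and> omega q r = 1)"

definition pos_parallel :: "'n::finite sp \<Rightarrow> 'n sp \<Rightarrow> bool" where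
  "pos_parallel a b = (\<exists>l>0. a = l *\<^sub>R b)"

definition m_minus :: "('n::finite sp \<Rightarrow> real) \<Rightarrow> 'n sp set \<Rightarrow> 'n sp \<Rightarrow> 'n sp" where
  "m_minus F M x = (THE m. m \<in> M \<and> pos_parallel (m - x) (reeb F m))"

definition Tbil :: "('n::finite sp \<Rightarrow> real) \<Rightarrow> 'n sp set \<Rightarrow> 'n sp \<Rightarrow> 'n sp" where
  "Tbil F M x = 2 *\<^sub>R m_minus F M x - x"

definition n_plus :: "('n::finite sp \<Rightarrow> real) \<Rightarrow> 'n sp set \<Rightarrow> 'n sp \<Rightarrow> 'n sp" where
  "n_plus F M x = (THE n. n \<in> M \<and> pos_parallel (reeb F n) x)"

definition n_minus :: "('n::finite sp \<Rightarrow> real) \<Rightarrow> 'n sp set \<Rightarrow> 'n sp \<Rightarrow> 'n sp" where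
  "n_minus F M x = (THE n. n \<in> M \<and> pos_parallel (reeb F n) (- x))"

end

theory Submission
  imports Defs "HOL-Analysis.Analysis"
begin



lemma cJ_cJ[simp]: "cJ (cJ z) = - z" by (simp add: cJ_def prod_eq_iff)
lemma inner_cJ_cJ[simp]: "cJ a \<bullet> cJ b = a \<bullet> b" by (simp add: cJ_def inner_prod_def add.commute)
lemma norm_cJ[simp]: "norm (cJ z) = norm z" by (simp add: norm_eq_sqrt_inner)
lemma cJ_diff: "cJ (a - b) = cJ a - cJ b" by (simp add: cJ_def)
lemma cJ_add: "cJ (a + b) = cJ a + cJ b" by (simp add: cJ_def)
lemma cJ_minus[simp]: "cJ (- a) = - cJ a" by (simp add: cJ_def)
lemma cJ_scale[simp]: "cJ (r *\<^sub>R a) = r *\<^sub>R cJ a" by (simp add: cJ_def)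
lemma cJ_zero[simp]: "cJ 0 = 0" by (simp add: cJ_def zero_prod_def)

lemma linear_expand:
  fixes f :: "'a::euclidean_space \<Rightarrow> real"
  assumes "linear f"
  shows "f x = (\<Sum>b\<in>Basis. (x \<bullet> b) * f b)"
proof -
  have "f x = f (\<Sum>b\<in>Basis. (x \<bullet> b) *\<^sub>R b)" by (simp add: euclidean_representation)
  also have "\<dots> = (\<Sum>b\<in>Basis. (x \<bullet> b) * f b)"
    using assms by (simp add: linear_sum linear_scale o_def)
  finally show ?thesis .
qed

lemma unit_diff_bound:
  fixes a b :: "'a::real_normed_vector"
  assumes "a \<noteq> 0" "b \<noteq> 0"
  shows "norm (a /\<^sub>R norm a - b /\<^sub>R norm b) \<le> 2 * norm (a - b) / norm b"
proof -
  have na: "norm a > 0" and nb: "norm b > 0" using assms by auto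
  have "norm (a /\<^sub>R norm a - b /\<^sub>R norm b) \<le> norm (a /\<^sub>R norm a - a /\<^sub>R norm b) + norm (a /\<^sub>R norm b - b /\<^sub>R norm b)"
    using norm_triangle_ineq[of "a /\<^sub>R norm a - a /\<^sub>R norm b" "a /\<^sub>R norm b - b /\<^sub>R norm b"] by simp
  moreover have "a /\<^sub>R norm a - a /\<^sub>R norm b = ((norm b - norm a) / (norm a * norm b)) *\<^sub>R a"
  proof -
    have e: "1/norm a - 1/norm b = (norm b - norm a) / (norm a * norm b)" using na nb by (simp add: field_simps)
    have "a /\<^sub>R norm a - a /\<^sub>R norm b = (1/norm a - 1/norm b) *\<^sub>R a"
      by (simp add: scaleR_diff_left divide_inverse_commute)
    thus ?thesis using e by simp
  qed
  hence "norm (a /\<^sub>R norm a - a /\<^sub>R norm b) = \<bar>norm b - norm a\<bar> / (norm a * norm b) * norm a"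
    using na nb by simp
  hence "norm (a /\<^sub>R norm a - a /\<^sub>R norm b) = \<bar>norm b - norm a\<bar> / norm b"
    using na nb by simp
  moreover have "\<bar>norm b - norm a\<bar> \<le> norm (a - b)"
    by (metis norm_triangle_ineq3 abs_minus_commute)
  moreover have "a /\<^sub>R norm b - b /\<^sub>R norm b = (1 / norm b) *\<^sub>R (a - b)"
    by (simp add: scaleR_diff_right divide_inverse_commute)
  hence "norm (a /\<^sub>R norm b - b /\<^sub>R norm b) = norm (a - b) / norm b"
    using nb by simp
  ultimately have "norm (a /\<^sub>R norm a - b /\<^sub>R norm b) \<le> norm (a - b) / norm b + norm (a - b) / norm b"
    using nb by (smt (verit) divide_right_mono)
  thus ?thesis by simp
qed

lemma line_deriv:
  assumes "\<And>y. (f has_derivative f' y) (at y)" "\<And>y. linear (f' y)"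
  shows "((\<lambda>t. f (z + t *\<^sub>R w)) has_real_derivative f' (z + t *\<^sub>R w) w) (at t)"
proof -
  have "((\<lambda>t. z + t *\<^sub>R w) has_derivative (\<lambda>s. s *\<^sub>R w)) (at t)"
    by (auto intro!: derivative_eq_intros)
  from has_derivative_compose[OF this assms(1)]
  have "((\<lambda>t. f (z + t *\<^sub>R w)) has_derivative (\<lambda>s. f' (z + t *\<^sub>R w) (s *\<^sub>R w))) (at t)" .
  moreover have "(\<lambda>s. f' (z + t *\<^sub>R w) (s *\<^sub>R w)) = (*) (f' (z + t *\<^sub>R w) w)"
    using assms(2) by (auto simp: linear_scale)
  ultimately show ?thesis by (simp add: has_field_derivative_def)
qed




locale S3 =
  fixes F :: "'n::finite sp \<Rightarrow> real" and c :: real and M K :: "'n sp set"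
  assumes sm: "smooth F"
    and ph: "pos_def_hessian F"
    and Mdef: "M = {z. F z = c}"
    and Kdef: "K = {z. F z \<le> c}"
    and cK: "compact K" and cvK: "convex K" and zK: "0 \<in> interior K"
    and MK: "M = frontier K"
begin

definition DF where "DF y = frechet_derivative F (at y)"
definition DD where "DD h y = frechet_derivative (\<lambda>z. DF z h) (at y)"
definition grad where "grad y = (\<Sum>b\<in>Basis. DF y b *\<^sub>R b)"

lemma C3: "continuous_on UNIV F \<and> (\<forall>x. F differentiable (at x)) \<and>
  (\<forall>v. continuous_on UNIV (\<lambda>x. DF x v) \<and> (\<forall>x. (\<lambda>x. DF x v) differentiable (at x)) \<and>
     (\<forall>w. continuous_on UNIV (\<lambda>x. DD v x w)))"
proof -
  have "Ck (Suc (Suc (Suc 0))) F" using sm unfolding smooth_def by blast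
  thus ?thesis unfolding DF_def DD_def by simp
qed

lemma DF_has: "(F has_derivative DF x) (at x)"
  using C3 frechet_derivative_works unfolding DF_def by blast
lemma DF_lin: "linear (DF x)" using DF_has has_derivative_linear by blast
lemma DD_has: "((\<lambda>y. DF y h) has_derivative DD h x) (at x)"
  using C3 frechet_derivative_works unfolding DD_def by blast
lemma DD_lin: "linear (DD h x)" using DD_has has_derivative_linear by blast
lemma DF_cont: "continuous_on UNIV (\<lambda>x. DF x h)" using C3 by blast
lemma DD_cont: "continuous_on UNIV (\<lambda>x. DD h x w)" using C3 by blast

lemma DF_grad: "DF y v = grad y \<bullet> v"
  unfolding grad_def using linear_expand[OF DF_lin, of y v]
  by (simp add: inner_sum_right inner_commute mult.commute)

lemma grad_cont: "continuous_on UNIV grad"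
  unfolding grad_def by (intro continuous_intros DF_cont)

definition Q where "Q z h = (\<Sum>i\<in>Basis. \<Sum>j\<in>Basis. (h \<bullet> i) * (h \<bullet> j) * DD i z j)"

lemma DD_Q: "DD h z h = Q z h"
proof -
  have eq: "(\<lambda>y. DF y h) = (\<lambda>y. \<Sum>i\<in>Basis. (h \<bullet> i) * DF y i)"
    by (rule ext) (rule linear_expand[OF DF_lin])
  have "((\<lambda>y. \<Sum>i\<in>Basis. (h \<bullet> i) * DF y i) has_derivative (\<lambda>w. \<Sum>i\<in>Basis. (h \<bullet> i) * DD i z w)) (at z)"
    by (rule has_derivative_sum, rule has_derivative_mult_right, rule DD_has)
  hence "DD h z = (\<lambda>w. \<Sum>i\<in>Basis. (h \<bullet> i) * DD i z w)"
    unfolding DD_def eq by (rule frechet_derivative_at[symmetric])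
  hence "DD h z h = (\<Sum>i\<in>Basis. (h \<bullet> i) * DD i z h)" by simp
  also have "\<dots> = (\<Sum>i\<in>Basis. (h \<bullet> i) * (\<Sum>j\<in>Basis. (h \<bullet> j) * DD i z j))"
  proof -
    have "\<And>i. DD i z h = (\<Sum>j\<in>Basis. (h \<bullet> j) * DD i z j)" by (rule linear_expand[OF DD_lin])
    thus ?thesis by simp
  qed
  also have "\<dots> = Q z h" unfolding Q_def by (simp add: sum_distrib_left mult.assoc)
  finally show ?thesis .
qed

lemma Q_cont: "continuous_on UNIV (\<lambda>p. Q (fst p) (snd p))"
proof -
  have c1: "\<And>i j. continuous_on UNIV (\<lambda>p::'n sp \<times> 'n sp. DD i (fst p) j)"
    using continuous_on_compose2[OF DD_cont continuous_on_fst[OF continuous_on_id]] by auto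
  show ?thesis unfolding Q_def by (intro continuous_intros c1)
qed

lemma Q_hom: "Q z (r *\<^sub>R h) = r^2 * Q z h"
  unfolding Q_def by (simp add: sum_distrib_left power2_eq_square mult_ac)

lemma Q_pos: "h \<noteq> 0 \<Longrightarrow> Q z h > 0"
  using ph unfolding pos_def_hessian_def DD_Q[symmetric] DD_def DF_def by blast

lemma K_ne: "K \<noteq> {}" using zK interior_subset by blast

lemma kappa_ex: "\<exists>\<kappa>>0. \<forall>z\<in>K. \<forall>h. Q z h \<ge> \<kappa> * (norm h)^2"
proof -
  have cpt: "compact (K \<times> sphere (0::'n sp) 1)" by (intro compact_Times cK compact_sphere)
  have ne: "K \<times> sphere (0::'n sp) 1 \<noteq> {}"
  proof -
    obtain e :: "'n sp" where "e \<in> Basis" by (meson SOME_Basis)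
    hence "norm e = 1" by simp
    thus ?thesis using K_ne by auto
  qed
  obtain p where p: "p \<in> K \<times> sphere 0 1" and pm: "\<forall>y\<in>K \<times> sphere 0 1. Q (fst p) (snd p) \<le> Q (fst y) (snd y)"
    using continuous_attains_inf[OF cpt ne continuous_on_subset[OF Q_cont]] by blast
  have "snd p \<noteq> 0" using p by auto
  hence kp: "Q (fst p) (snd p) > 0" by (rule Q_pos)
  show ?thesis
  proof (intro exI[of _ "Q (fst p) (snd p)"] conjI kp ballI allI)
    fix z h assume z: "z \<in> K"
    show "Q (fst p) (snd p) * (norm h)^2 \<le> Q z h"
    proof (cases "h = 0")
      case True thus ?thesis by (simp add: Q_def)
    next
      case False
      have "(z, h /\<^sub>R norm h) \<in> K \<times> sphere 0 1" using z False by auto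
      hence "Q (fst p) (snd p) \<le> Q z (h /\<^sub>R norm h)" using pm by force
      also have "Q z (h /\<^sub>R norm h) = Q z h / (norm h)^2"
        using Q_hom[of z "1 / norm h" h] by (simp add: divide_inverse_commute power_inverse)
      finally show ?thesis using False by (simp add: pos_le_divide_eq)
    qed
  qed
qed

end


context S3 begin

definition kap where "kap = (SOME \<kappa>. \<kappa> > 0 \<and> (\<forall>z\<in>K. \<forall>h. Q z h \<ge> \<kappa> * (norm h)^2))"

lemma kap: "kap > 0" "\<And>z h. z \<in> K \<Longrightarrow> Q z h \<ge> kap * (norm h)^2"
  using someI_ex[OF kappa_ex] unfolding kap_def[symmetric] by auto

lemma inK: "z1 \<in> K \<Longrightarrow> z2 \<in> K \<Longrightarrow> 0 \<le> t \<Longrightarrow> t \<le> 1 \<Longrightarrow> z1 + t *\<^sub>R (z2 - z1) \<in> K"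
proof -
  assume a: "z1 \<in> K" "z2 \<in> K" "0 \<le> t" "t \<le> 1"
  have "(1 - t) *\<^sub>R z1 + t *\<^sub>R z2 \<in> K" using convexD[OF cvK a(1,2)] a(3,4) by auto
  moreover have "(1 - t) *\<^sub>R z1 + t *\<^sub>R z2 = z1 + t *\<^sub>R (z2 - z1)" by (simp add: algebra_simps)
  ultimately show ?thesis by simp
qed

lemma mono_grad:
  assumes "z1 \<in> K" "z2 \<in> K"
  shows "(grad z2 - grad z1) \<bullet> (z2 - z1) \<ge> kap * (norm (z2 - z1))^2"
proof -
  define d where "d = z2 - z1"
  have der: "\<And>t. ((\<lambda>t. DF (z1 + t *\<^sub>R d) d) has_real_derivative DD d (z1 + t *\<^sub>R d) d) (at t)"
    by (rule line_deriv[where f="\<lambda>y. DF y d"], rule DD_has, rule DD_lin)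
  obtain \<xi> where xi: "\<xi> > 0" "\<xi> < 1" and eq: "DF (z1 + 1 *\<^sub>R d) d - DF (z1 + 0 *\<^sub>R d) d = (1 - 0) * DD d (z1 + \<xi> *\<^sub>R d) d"
    using MVT2[of 0 1 "\<lambda>t. DF (z1 + t *\<^sub>R d) d" "\<lambda>t. DD d (z1 + t *\<^sub>R d) d", OF _ der] by auto
  have "z1 + \<xi> *\<^sub>R d \<in> K" unfolding d_def using inK[OF assms] xi by auto
  hence "DD d (z1 + \<xi> *\<^sub>R d) d \<ge> kap * (norm d)^2" using kap(2) DD_Q by metis
  moreover have "z1 + 1 *\<^sub>R d = z2" by (simp add: d_def)
  ultimately show ?thesis using eq by (simp add: DF_grad d_def inner_diff_left)
qed

lemma conv:
  assumes "z \<in> K" "n \<in> K"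
  shows "F z \<ge> F n + grad n \<bullet> (z - n)"
proof -
  define d where "d = z - n"
  have der: "\<And>t. ((\<lambda>t. F (n + t *\<^sub>R d)) has_real_derivative DF (n + t *\<^sub>R d) d) (at t)"
    by (rule line_deriv, rule DF_has, rule DF_lin)
  obtain \<xi> where xi: "\<xi> > 0" "\<xi> < 1" and eq: "F (n + 1 *\<^sub>R d) - F (n + 0 *\<^sub>R d) = (1 - 0) * DF (n + \<xi> *\<^sub>R d) d"
    using MVT2[of 0 1 "\<lambda>t. F (n + t *\<^sub>R d)" "\<lambda>t. DF (n + t *\<^sub>R d) d", OF _ der] by auto
  have inK2: "n + \<xi> *\<^sub>R d \<in> K" unfolding d_def using inK[OF assms(2,1)] xi by auto
  have "(grad (n + \<xi> *\<^sub>R d) - grad n) \<bullet> ((n + \<xi> *\<^sub>R d) - n) \<ge> kap * (norm ((n + \<xi> *\<^sub>R d) - n))^2"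
    by (rule mono_grad[OF assms(2) inK2])
  hence "\<xi> * ((grad (n + \<xi> *\<^sub>R d) - grad n) \<bullet> d) \<ge> 0"
    using kap(1) by (smt (verit, best) inner_scaleR_right add_diff_cancel_left' mult_nonneg_nonneg zero_le_power2)
  hence "(grad (n + \<xi> *\<^sub>R d) - grad n) \<bullet> d \<ge> 0" using xi by (simp add: zero_le_mult_iff)
  moreover have "n + 1 *\<^sub>R d = z" by (simp add: d_def)
  ultimately show ?thesis using eq by (simp add: DF_grad d_def inner_diff_left)
qed

lemma K_closed: "closed K" using cK compact_imp_closed by blast
lemma M_sub: "M \<subseteq> K" using MK K_closed by (simp add: frontier_def closure_closed) 
lemma zero_K: "0 \<in> K" using zK interior_subset by blast
lemma F0: "F 0 < c"
proof -
  have "0 \<notin> M" using MK zK by (simp add: frontier_def)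
  thus ?thesis using zero_K Mdef Kdef by auto
qed
lemma M_F: "q \<in> M \<Longrightarrow> F q = c" using Mdef by auto

lemma qg_pos: "q \<in> M \<Longrightarrow> q \<bullet> grad q > 0"
proof -
  assume q: "q \<in> M"
  have qK: "q \<in> K" using M_sub q by blast
  have "F 0 \<ge> F q + grad q \<bullet> (0 - q)" using conv[OF zero_K qK] .
  thus ?thesis using F0 M_F[OF q] by (simp add: inner_commute)
qed

lemma grad_nz: "q \<in> M \<Longrightarrow> grad q \<noteq> 0" using qg_pos by fastforce

lemma M_compact: "compact M"
  using MK cK by (simp add: compact_frontier)

definition Abd where "Abd = (SOME A. A > 0 \<and> (\<forall>q\<in>M. norm (grad q) \<le> A))"
lemma Abd: "Abd > 0" "\<And>q. q \<in> M \<Longrightarrow> norm (grad q) \<le> Abd"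
proof -
  have "compact (grad ` M)" by (rule compact_continuous_image[OF continuous_on_subset[OF grad_cont] M_compact]) simp
  then obtain A where "A > 0" "\<forall>y\<in>grad ` M. norm y \<le> A" using compact_imp_bounded bounded_pos by metis
  hence ex: "\<exists>A. A > 0 \<and> (\<forall>q\<in>M. norm (grad q) \<le> A)" by auto
  show "Abd > 0" "\<And>q. q \<in> M \<Longrightarrow> norm (grad q) \<le> Abd" using someI_ex[OF ex] unfolding Abd_def[symmetric] by auto
qed

definition G where "G n u = (n \<in> M \<and> (\<exists>l>0. grad n = l *\<^sub>R u))"

lemma Lip1:
  assumes n1: "n1 \<in> M" and n2: "n2 \<in> M" and g1: "grad n1 = a1 *\<^sub>R u1" and g2: "grad n2 = a2 *\<^sub>R u2"
    and a1: "a1 > 0" and a2: "a2 > 0" and u1: "norm u1 = 1" and u2: "norm u2 = 1"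
  shows "kap * norm (n1 - n2) \<le> Abd * norm (u1 - u2)"
proof -
  define d where "d = n1 - n2"
  have m: "(grad n1 - grad n2) \<bullet> d \<ge> kap * (norm d)^2"
    using mono_grad[of n2 n1] M_sub n1 n2 unfolding d_def by auto
  have K1: "n1 \<in> K" and K2: "n2 \<in> K" using M_sub n1 n2 by auto
  have c1: "F n2 \<ge> F n1 + grad n1 \<bullet> (n2 - n1)" using conv[OF K2 K1] .
  have c2: "F n1 \<ge> F n2 + grad n2 \<bullet> (n1 - n2)" using conv[OF K1 K2] .
  have "grad n1 \<bullet> d \<ge> 0" using c1 M_F[OF n1] M_F[OF n2] unfolding d_def
    by (metis add_le_same_cancel1 inner_diff_right neg_0_le_iff_le diff_0 minus_diff_eq inner_minus_right)
  hence p: "u1 \<bullet> d \<ge> 0" using g1 a1 by (simp add: zero_le_mult_iff)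
  have "grad n2 \<bullet> d \<le> 0" using c2 M_F[OF n1] M_F[OF n2] unfolding d_def by simp
  hence q: "u2 \<bullet> d \<le> 0" using g2 a2 by (simp add: mult_le_0_iff)
  have A1: "a1 \<le> Abd" using Abd(2)[OF n1] g1 a1 u1 by simp
  have A2: "a2 \<le> Abd" using Abd(2)[OF n2] g2 a2 u2 by simp
  have e: "(grad n1 - grad n2) \<bullet> d = a1 * (u1 \<bullet> d) - a2 * (u2 \<bullet> d)"
    using g1 g2 by (simp add: inner_diff_left)
  have cs: "(u1 - u2) \<bullet> d \<le> norm (u1 - u2) * norm d" by (rule norm_cauchy_schwarz)
  have "a1 * (u1 \<bullet> d) - a2 * (u2 \<bullet> d) \<le> Abd * ((u1 \<bullet> d) - (u2 \<bullet> d))"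
  proof (cases "a1 \<ge> a2")
    case True
    have "a1 * (u1 \<bullet> d) - a2 * (u2 \<bullet> d) = a1 * ((u1 \<bullet> d) - (u2 \<bullet> d)) + (a1 - a2) * (u2 \<bullet> d)"
      by (simp add: algebra_simps)
    also have "(a1 - a2) * (u2 \<bullet> d) \<le> 0" using True q by (simp add: mult_nonneg_nonpos)
    also have "a1 * ((u1 \<bullet> d) - (u2 \<bullet> d)) \<le> Abd * ((u1 \<bullet> d) - (u2 \<bullet> d))"
      using A1 p q by (simp add: mult_right_mono)
    finally show ?thesis by simp
  next
    case False
    have "a1 * (u1 \<bullet> d) - a2 * (u2 \<bullet> d) = a2 * ((u1 \<bullet> d) - (u2 \<bullet> d)) + (a1 - a2) * (u1 \<bullet> d)"
      by (simp add: algebra_simps)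
    also have "(a1 - a2) * (u1 \<bullet> d) \<le> 0" using False p by (simp add: mult_nonpos_nonneg)
    also have "a2 * ((u1 \<bullet> d) - (u2 \<bullet> d)) \<le> Abd * ((u1 \<bullet> d) - (u2 \<bullet> d))"
      using A2 p q by (simp add: mult_right_mono)
    finally show ?thesis by simp
  qed
  also have "(u1 \<bullet> d) - (u2 \<bullet> d) = (u1 - u2) \<bullet> d" by (simp add: inner_diff_left)
  finally have "kap * (norm d)^2 \<le> Abd * ((u1 - u2) \<bullet> d)" using m e by linarith
  also have "\<dots> \<le> Abd * (norm (u1 - u2) * norm d)" using cs Abd(1) by (simp add: mult_left_mono)
  finally have k: "kap * (norm d)^2 \<le> Abd * norm (u1 - u2) * norm d" by simp
  show ?thesis
  proof (cases "d = 0")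
    case True thus ?thesis using Abd(1) by (simp add: d_def)
  next
    case False
    hence "norm d > 0" by simp
    thus ?thesis using k unfolding d_def[symmetric]
      by (simp add: power2_eq_square)
  qed
qed

definition Lc where "Lc = Abd / kap"
lemma Lc_pos: "Lc > 0" using Abd(1) kap(1) by (simp add: Lc_def)

lemma Lip:
  assumes "G n1 v1" "G n2 v2" "v1 \<noteq> 0" "v2 \<noteq> 0"
  shows "norm (n1 - n2) \<le> Lc * (2 * norm (v1 - v2) / norm v2)"
proof -
  obtain l1 where l1: "l1 > 0" "grad n1 = l1 *\<^sub>R v1" and n1: "n1 \<in> M" using assms(1) G_def by auto
  obtain l2 where l2: "l2 > 0" "grad n2 = l2 *\<^sub>R v2" and n2: "n2 \<in> M" using assms(2) G_def by auto
  have g1: "grad n1 = (l1 * norm v1) *\<^sub>R (v1 /\<^sub>R norm v1)" using l1 assms(3) by simp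
  have g2: "grad n2 = (l2 * norm v2) *\<^sub>R (v2 /\<^sub>R norm v2)" using l2 assms(4) by simp
  have "kap * norm (n1 - n2) \<le> Abd * norm (v1 /\<^sub>R norm v1 - v2 /\<^sub>R norm v2)"
    by (rule Lip1[OF n1 n2 g1 g2]) (use l1 l2 assms(3,4) in auto)
  also have "\<dots> \<le> Abd * (2 * norm (v1 - v2) / norm v2)"
    by (rule mult_left_mono[OF unit_diff_bound[OF assms(3,4)]]) (use Abd(1) in simp)
  finally have "kap * norm (n1 - n2) \<le> Abd * (2 * norm (v1 - v2) / norm v2)" .
  hence "norm (n1 - n2) \<le> Abd * (2 * norm (v1 - v2) / norm v2) / kap" using kap(1) by (metis mult.commute pos_le_divide_eq)
  thus ?thesis unfolding Lc_def by (simp add: mult.commute)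
qed

lemma G_unique: "G n1 v \<Longrightarrow> G n2 v \<Longrightarrow> v \<noteq> 0 \<Longrightarrow> n1 = n2"
  using Lip[of n1 v n2 v] by simp

end


context S3 begin

lemma G_exists:
  assumes u: "u \<noteq> 0"
  shows "\<exists>n. G n u"
proof -
  have cu: "continuous_on K (\<lambda>y. u \<bullet> y)" by (intro continuous_intros)
  obtain z where zK: "z \<in> K" and zmax: "\<forall>y\<in>K. u \<bullet> y \<le> u \<bullet> z"
    using continuous_attains_sup[OF cK K_ne cu] by blast
  have "z \<notin> interior K"
  proof
    assume "z \<in> interior K"
    then obtain e where e: "e > 0" "ball z e \<subseteq> K" using mem_interior by blast
    define y where "y = z + (e / 2 / norm u) *\<^sub>R u"
    have "dist z y = e / 2" using u e unfolding y_def dist_norm by simp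
    hence "y \<in> K" using e by auto
    moreover have "u \<bullet> y = u \<bullet> z + e / 2 * norm u"
      using u unfolding y_def by (simp add: inner_add_right power2_norm_eq_inner[symmetric] power2_eq_square)
    ultimately have "u \<bullet> z + e / 2 * norm u \<le> u \<bullet> z" using zmax by auto
    moreover have "e / 2 * norm u > 0" using e u by simp
    ultimately show False by linarith
  qed
  hence zM: "z \<in> M" using zK MK K_closed by (simp add: frontier_def closure_closed)
  define g where "g = grad z"
  have g: "g \<noteq> 0" using grad_nz[OF zM] g_def by simp
  show ?thesis
  proof (rule ccontr)
    assume nG: "\<not> (\<exists>n. G n u)"
    have cs: "g \<bullet> u < norm g * norm u"
    proof -
      have "g \<bullet> u \<le> norm g * norm u" by (rule norm_cauchy_schwarz)
      moreover have "g \<bullet> u \<noteq> norm g * norm u"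
      proof
        assume "g \<bullet> u = norm g * norm u"
        hence "norm g *\<^sub>R u = norm u *\<^sub>R g" using norm_cauchy_schwarz_eq by blast
        hence eq: "norm u *\<^sub>R g = norm g *\<^sub>R u" by simp
        have "g = (1 / norm u) *\<^sub>R (norm u *\<^sub>R g)" using u by simp
        also have "\<dots> = (norm g / norm u) *\<^sub>R u" unfolding eq by simp
        finally have "g = (norm g / norm u) *\<^sub>R u" .
        hence "G z u" unfolding G_def using zM g u g_def by (intro conjI exI[of _ "norm g / norm u"]) auto
        thus False using nG by blast
      qed
      ultimately show ?thesis by simp
    qed
    define w where "w = u /\<^sub>R norm u - g /\<^sub>R norm g"
    have gw: "g \<bullet> w < 0"
    proof -
      have "g \<bullet> w = (g \<bullet> u) / norm u - norm g"
        unfolding w_def using g by (simp add: inner_diff_right power2_norm_eq_inner[symmetric] power2_eq_square divide_inverse_commute)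
      also have "\<dots> < 0" using cs u by (simp add: divide_less_eq mult.commute)
      finally show ?thesis .
    qed
    have uw: "u \<bullet> w > 0"
    proof -
      have "u \<bullet> w = norm u - (g \<bullet> u) / norm g"
        unfolding w_def using u by (simp add: inner_diff_right power2_norm_eq_inner[symmetric] power2_eq_square divide_inverse_commute inner_commute)
      also have "\<dots> > 0" using cs g by (simp add: divide_less_eq mult.commute)
      finally show ?thesis .
    qed
    have der: "((\<lambda>t. F (z + t *\<^sub>R w)) has_real_derivative DF (z + 0 *\<^sub>R w) w) (at 0)"
      by (rule line_deriv, rule DF_has, rule DF_lin)
    hence der': "((\<lambda>t. F (z + t *\<^sub>R w)) has_real_derivative g \<bullet> w) (at 0)" by (simp add: DF_grad g_def)
    obtain d where d: "d > 0" "\<forall>h>0. h < d \<longrightarrow> F (z + (0 + h) *\<^sub>R w) < F (z + 0 *\<^sub>R w)"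
      using DERIV_neg_dec_right[OF der' gw] by blast
    have "F (z + (0 + d/2) *\<^sub>R w) < F (z + 0 *\<^sub>R w)" using d(2)[rule_format, of "d/2"] d(1) by simp
    hence "F (z + (d/2) *\<^sub>R w) < c" using M_F[OF zM] by simp
    hence "z + (d/2) *\<^sub>R w \<in> K" using Kdef by simp
    moreover have "u \<bullet> (z + (d/2) *\<^sub>R w) > u \<bullet> z" using uw d by (simp add: inner_add_right)
    ultimately show False using zmax by force
  qed
qed

lemma G_the: "v \<noteq> 0 \<Longrightarrow> G (THE n. G n v) v"
  using G_exists G_unique by (metis theI)

lemma reeb_eq:
  assumes q: "q \<in> M"
  shows "reeb F q = (1 / (q \<bullet> grad q)) *\<^sub>R cJ (grad q)"
proof -
  define g where "g = grad q"
  have qg: "q \<bullet> g > 0" using qg_pos[OF q] g_def by simp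
  have g: "g \<noteq> 0" using qg by auto
  have ts: "tangent_space F q = {v. g \<bullet> v = 0}"
    unfolding tangent_space_def DF_def[symmetric] DF_grad g_def by simp
  define r0 where "r0 = (1 / (q \<bullet> g)) *\<^sub>R cJ g"
  have P0: "(\<forall>v\<in>tangent_space F q. omega v r0 = 0) \<and> omega q r0 = 1"
    unfolding ts omega_def r0_def using qg by (simp add: inner_commute)
  have uniq: "r = r0" if P: "(\<forall>v\<in>tangent_space F q. omega v r = 0) \<and> omega q r = 1" for r
  proof -
    define s where "s = - cJ r"
    have rs: "r = cJ s" unfolding s_def by simp
    have P1: "\<forall>v\<in>{v. g \<bullet> v = 0}. cJ v \<bullet> cJ s = 0" using P unfolding ts omega_def rs by blast
    have orth: "\<And>v. g \<bullet> v = 0 \<Longrightarrow> v \<bullet> s = 0"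
      by (metis (mono_tags) P1 mem_Collect_eq inner_cJ_cJ)
    define \<mu> where "\<mu> = (s \<bullet> g) / (g \<bullet> g)"
    define v where "v = s - \<mu> *\<^sub>R g"
    have gg: "g \<bullet> g > 0" using g by simp
    have "g \<bullet> v = 0" unfolding v_def \<mu>_def using gg by (simp add: inner_diff_right inner_commute)
    hence vs: "v \<bullet> s = 0" by (rule orth)
    have "v \<bullet> v = v \<bullet> s - \<mu> * (v \<bullet> g)" unfolding v_def by (simp add: inner_diff_right)
    also have "\<dots> = 0" using vs \<open>g \<bullet> v = 0\<close> by (simp add: inner_commute)
    finally have "v = 0" by simp
    hence sg: "s = \<mu> *\<^sub>R g" unfolding v_def by simp
    have "omega q r = \<mu> * (q \<bullet> g)" unfolding omega_def rs sg by simp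
    hence "\<mu> = 1 / (q \<bullet> g)" using P qg by (simp add: field_simps)
    thus ?thesis unfolding rs sg r0_def by simp
  qed
  have "reeb F q = r0" unfolding reeb_def by (rule the_equality, rule P0, rule uniq, assumption)
  thus ?thesis unfolding r0_def g_def .
qed

lemma pp_reeb:
  assumes q: "q \<in> M"
  shows "pos_parallel (reeb F q) v \<longleftrightarrow> (\<exists>l>0. grad q = l *\<^sub>R (- cJ v))"
proof -
  define s where "s = 1 / (q \<bullet> grad q)"
  have s: "s > 0" unfolding s_def using qg_pos[OF q] by simp
  have r: "reeb F q = s *\<^sub>R cJ (grad q)" unfolding s_def reeb_eq[OF q] ..
  show ?thesis
  proof
    assume "pos_parallel (reeb F q) v"
    then obtain l where l: "l > 0" "s *\<^sub>R cJ (grad q) = l *\<^sub>R v" unfolding pos_parallel_def r by blast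
    hence "cJ (s *\<^sub>R cJ (grad q)) = cJ (l *\<^sub>R v)" by simp
    hence "- (s *\<^sub>R grad q) = l *\<^sub>R cJ v" by simp
    hence e1: "s *\<^sub>R grad q = l *\<^sub>R (- cJ v)" by (metis minus_minus scaleR_minus_right)
    have "grad q = (1 / s) *\<^sub>R (s *\<^sub>R grad q)" using s by simp
    hence "grad q = (l / s) *\<^sub>R (- cJ v)" unfolding e1 by simp
    thus "\<exists>l>0. grad q = l *\<^sub>R (- cJ v)" using l s by (intro exI[of _ "l / s"]) auto
  next
    assume "\<exists>l>0. grad q = l *\<^sub>R (- cJ v)"
    then obtain l where l: "l > 0" "grad q = l *\<^sub>R (- cJ v)" by blast
    have "reeb F q = (s * l) *\<^sub>R v" unfolding r l(2) by simp
    thus "pos_parallel (reeb F q) v" unfolding pos_parallel_def using s l by (intro exI[of _ "s * l"]) auto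
  qed
qed

lemma pp_sym1: "pos_parallel a b \<Longrightarrow> pos_parallel b a"
proof -
  assume "pos_parallel a b"
  then obtain l where l: "l > 0" "a = l *\<^sub>R b" unfolding pos_parallel_def by blast
  hence "b = (1 / l) *\<^sub>R a" by simp
  thus ?thesis unfolding pos_parallel_def using l by (intro exI[of _ "1 / l"]) auto
qed

lemma pp_sym: "pos_parallel a b \<longleftrightarrow> pos_parallel b a" using pp_sym1 by blast

lemma n_minus_eq: "n_minus F M x = (THE n. G n (cJ x))"
proof -
  have "(\<lambda>n. n \<in> M \<and> pos_parallel (reeb F n) (- x)) = (\<lambda>n. G n (cJ x))"
    by (rule ext) (auto simp: G_def pp_reeb)
  thus ?thesis unfolding n_minus_def by simp
qed

lemma n_plus_eq: "n_plus F M x = (THE n. G n (- cJ x))"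
proof -
  have "(\<lambda>n. n \<in> M \<and> pos_parallel (reeb F n) x) = (\<lambda>n. G n (- cJ x))"
    by (rule ext) (auto simp: G_def pp_reeb)
  thus ?thesis unfolding n_plus_def by simp
qed

lemma m_minus_eq: "m_minus F M x = (THE m. G m (cJ (x - m)))"
proof -
  have "(\<lambda>m. m \<in> M \<and> pos_parallel (m - x) (reeb F m)) = (\<lambda>m. G m (cJ (x - m)))"
  proof (rule ext)
    fix m
    show "(m \<in> M \<and> pos_parallel (m - x) (reeb F m)) = G m (cJ (x - m))"
    proof (cases "m \<in> M")
      case True
      have "- cJ (m - x) = cJ (x - m)" by (simp add: cJ_diff)
      thus ?thesis using True pp_reeb[OF True, of "m - x"] pp_sym[of "m - x" "reeb F m"] unfolding G_def by simp
    qed (simp add: G_def)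
  qed
  thus ?thesis unfolding m_minus_def by simp
qed

end


context S3 begin

lemma cJ_nz: "a \<noteq> b \<Longrightarrow> cJ (a - b) \<noteq> 0" by (metis norm_cJ norm_eq_zero right_minus_eq)

definition Rb where "Rb = (SOME R. R > 0 \<and> (\<forall>z\<in>K. norm z \<le> R))"
lemma Rb: "Rb > 0" "\<And>z. z \<in> K \<Longrightarrow> norm z \<le> Rb"
proof -
  have ex: "\<exists>R. R > 0 \<and> (\<forall>z\<in>K. norm z \<le> R)" using compact_imp_bounded[OF cK] bounded_pos by metis
  show "Rb > 0" "\<And>z. z \<in> K \<Longrightarrow> norm z \<le> Rb" using someI_ex[OF ex] unfolding Rb_def[symmetric] by auto
qed

lemma m_exists:
  assumes x: "norm x > Rb"
  shows "\<exists>m. G m (cJ (x - m))"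
proof -
  define \<Phi> where "\<Phi> z = (THE n. G n (cJ (x - z)))" for z
  have nz: "cJ (x - z) \<noteq> 0" if "z \<in> K" for z
  proof -
    have "norm z \<le> Rb" using Rb(2) that by blast
    hence "x \<noteq> z" using x by auto
    thus ?thesis by (rule cJ_nz)
  qed
  have GP: "G (\<Phi> z) (cJ (x - z))" if "z \<in> K" for z unfolding \<Phi>_def by (rule G_the[OF nz[OF that]])
  have dx: "norm (x - z) \<ge> norm x - Rb" if "z \<in> K" for z
    using Rb(2)[OF that] norm_triangle_ineq2[of x z] by linarith
  have lip: "(2 * Lc / (norm x - Rb))-lipschitz_on K \<Phi>"
  proof (rule lipschitz_onI)
    fix z1 z2 assume z: "z1 \<in> K" "z2 \<in> K"
    have "norm (\<Phi> z1 - \<Phi> z2) \<le> Lc * (2 * norm (cJ (x - z1) - cJ (x - z2)) / norm (cJ (x - z2)))"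
      by (rule Lip[OF GP[OF z(1)] GP[OF z(2)] nz[OF z(1)] nz[OF z(2)]])
    also have "norm (cJ (x - z1) - cJ (x - z2)) = norm (z1 - z2)"
    proof -
    have "cJ (x - z1) - cJ (x - z2) = cJ ((x - z1) - (x - z2))" by (simp only: cJ_diff)
    also have "(x - z1) - (x - z2) = z2 - z1" by simp
    finally show ?thesis by (simp add: norm_minus_commute)
  qed
    also have "norm (cJ (x - z2)) = norm (x - z2)" by simp
    also have "Lc * (2 * norm (z1 - z2) / norm (x - z2)) \<le> Lc * (2 * norm (z1 - z2) / (norm x - Rb))"
      using dx[OF z(2)] x Lc_pos by (intro mult_left_mono divide_left_mono) (auto intro!: mult_pos_pos)
    finally show "dist (\<Phi> z1) (\<Phi> z2) \<le> 2 * Lc / (norm x - Rb) * dist z1 z2"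
      by (simp add: dist_norm mult_ac)
  next
    show "0 \<le> 2 * Lc / (norm x - Rb)" using x Lc_pos by simp
  qed
  have cont: "continuous_on K \<Phi>" by (rule lipschitz_on_continuous_on[OF lip])
  have maps: "\<Phi> \<in> K \<rightarrow> K" using GP M_sub unfolding G_def by auto
  obtain m where "m \<in> K" "\<Phi> m = m" using brouwer[OF cK cvK K_ne cont maps] by blast
  thus ?thesis using GP by metis
qed

lemma m_unique:
  assumes x: "norm x > Rb + 2 * Lc" and m1: "G m1 (cJ (x - m1))" and m2: "G m2 (cJ (x - m2))"
  shows "m1 = m2"
proof -
  have K: "m1 \<in> K" "m2 \<in> K" using m1 m2 M_sub unfolding G_def by auto
  have dx: "norm (x - m2) \<ge> norm x - Rb"
    using Rb(2)[OF K(2)] norm_triangle_ineq2[of x m2] by linarith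
  have nz1: "cJ (x - m1) \<noteq> 0" and nz2: "cJ (x - m2) \<noteq> 0"
  proof -
    have "norm m1 < norm x" "norm m2 < norm x" using Rb(2)[OF K(1)] Rb(2)[OF K(2)] x Lc_pos by linarith+
    hence "x \<noteq> m1" "x \<noteq> m2" by auto
    show "cJ (x - m1) \<noteq> 0" using cJ_nz[of x m1] \<open>x \<noteq> m1\<close> by blast
    show "cJ (x - m2) \<noteq> 0" using cJ_nz[of x m2] \<open>x \<noteq> m2\<close> by blast
  qed
  have "norm (m1 - m2) \<le> Lc * (2 * norm (cJ (x - m1) - cJ (x - m2)) / norm (cJ (x - m2)))"
    by (rule Lip[OF m1 m2 nz1 nz2])
  also have "norm (cJ (x - m1) - cJ (x - m2)) = norm (m1 - m2)"
  proof -
    have "cJ (x - m1) - cJ (x - m2) = cJ ((x - m1) - (x - m2))" by (simp only: cJ_diff)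
    also have "(x - m1) - (x - m2) = m2 - m1" by simp
    finally show ?thesis by (simp add: norm_minus_commute)
  qed
  also have "norm (cJ (x - m2)) = norm (x - m2)" by simp
  finally have a: "norm (m1 - m2) \<le> Lc * (2 * norm (m1 - m2) / norm (x - m2))" .
  have "norm (x - m2) > 2 * Lc" using dx x by linarith
  show ?thesis
  proof (rule ccontr)
    assume ne: "m1 \<noteq> m2"
    hence p: "norm (m1 - m2) > 0" by simp
    have "Lc * (2 * norm (m1 - m2) / norm (x - m2)) < Lc * (2 * norm (m1 - m2) / (2 * Lc))"
      using Lc_pos p \<open>norm (x - m2) > 2 * Lc\<close> by (intro mult_strict_left_mono divide_strict_left_mono) (auto intro!: mult_pos_pos)
    also have "\<dots> = norm (m1 - m2)" using Lc_pos by simp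
    finally show False using a by simp
  qed
qed

lemma m_minus_G:
  assumes x: "norm x > Rb + 2 * Lc"
  shows "G (m_minus F M x) (cJ (x - m_minus F M x))"
proof -
  have "Rb < norm x" using x Lc_pos by linarith
  then obtain m where m: "G m (cJ (x - m))" using m_exists by blast
  show ?thesis unfolding m_minus_eq by (rule theI[of _ m], rule m, rule m_unique[OF x], assumption, rule m)
qed

end


context S3 begin

lemma n_minus_G: "x \<noteq> 0 \<Longrightarrow> G (n_minus F M x) (cJ x)"
  unfolding n_minus_eq by (rule G_the) (metis cJ_nz diff_zero)

lemma n_plus_G: "x \<noteq> 0 \<Longrightarrow> G (n_plus F M x) (- cJ x)"
  unfolding n_plus_eq by (rule G_the) (metis cJ_nz diff_zero neg_equal_0_iff_equal)

lemma G_norm: "G n v \<Longrightarrow> norm n \<le> Rb" using Rb(2) M_sub unfolding G_def by blast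

lemma main:
  "\<exists>C \<delta>. C > 0 \<and> \<delta> > 0 \<and>
    (\<forall>x. norm x \<ge> 1 / \<delta> \<longrightarrow>
      (let y = Tbil F M x in
        norm (n_minus F M x - m_minus F M x) \<le> C / norm x \<and>
        norm (m_minus F M y - n_minus F M y) \<le> C / norm x \<and>
        norm (n_minus F M y - n_plus F M x) \<le> C / norm x))"
proof (intro exI conjI allI impI)
  define X where "X = 4 * Rb + 4 * Lc + 1"
  have X: "X > 0" using Rb(1) Lc_pos unfolding X_def by simp
  show "4 * Lc * Rb + 1 > 0" using Rb(1) Lc_pos by (simp add: mult_pos_pos add_pos_pos)
  show "1 / X > 0" using X by simp
  fix x :: "'n sp" assume "norm x \<ge> 1 / (1 / X)"
  hence nx: "norm x \<ge> X" by simp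
  have xpos: "norm x > 0" using nx X by linarith
  hence x0: "x \<noteq> 0" by auto
  define m where "m = m_minus F M x"
  have x1: "norm x > Rb + 2 * Lc" using nx Rb(1) Lc_pos unfolding X_def by linarith
  have Gm: "G m (cJ (x - m))" unfolding m_def by (rule m_minus_G[OF x1])
  have mR: "norm m \<le> Rb" by (rule G_norm[OF Gm])
  define y where "y = 2 *\<^sub>R m - x"
  have ydef: "Tbil F M x = y" unfolding y_def m_def Tbil_def ..
  have ny: "norm y \<ge> norm x - 2 * Rb"
  proof -
    have xe: "x = 2 *\<^sub>R m - y" by (simp add: y_def)
    have "norm x \<le> norm (2 *\<^sub>R m) + norm y" unfolding xe by (rule norm_triangle_ineq4)
    thus ?thesis using mR by simp
  qed
  have y1: "norm y > Rb + 2 * Lc" using ny nx Rb(1) Lc_pos unfolding X_def by linarith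
  have y2: "norm y \<ge> norm x / 2" using ny nx Rb(1) Lc_pos unfolding X_def by linarith
  have ypos: "norm y > 0" using y1 Rb(1) Lc_pos by linarith
  hence y0: "y \<noteq> 0" by auto
  define m' where "m' = m_minus F M y"
  have Gm': "G m' (cJ (y - m'))" unfolding m'_def by (rule m_minus_G[OF y1])
  have mR': "norm m' \<le> Rb" by (rule G_norm[OF Gm'])
  define n1 where "n1 = n_minus F M x"
  have Gn1: "G n1 (cJ x)" unfolding n1_def by (rule n_minus_G[OF x0])
  define n' where "n' = n_minus F M y"
  have Gn': "G n' (cJ y)" unfolding n'_def by (rule n_minus_G[OF y0])
  define np where "np = n_plus F M x"
  have Gnp: "G np (- cJ x)" unfolding np_def by (rule n_plus_G[OF x0])
  have nzx: "cJ x \<noteq> 0" "- cJ x \<noteq> 0" using x0 cJ_nz[of x 0] by auto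
  have nzy: "cJ y \<noteq> 0" using y0 cJ_nz[of y 0] by auto
  have nzxm: "cJ (x - m) \<noteq> 0" and nzym: "cJ (y - m') \<noteq> 0"
  proof -
    have "norm m < norm x" "norm m' < norm y" using mR mR' x1 y1 Lc_pos by linarith+
    hence "x \<noteq> m" "y \<noteq> m'" by auto
    thus "cJ (x - m) \<noteq> 0" "cJ (y - m') \<noteq> 0" using cJ_nz by blast+
  qed
  have LR: "Lc * Rb \<ge> 0" using Lc_pos Rb(1) by simp
  have b1: "norm (n1 - m) \<le> (4 * Lc * Rb + 1) / norm x"
  proof -
    have "norm (m - n1) \<le> Lc * (2 * norm (cJ (x - m) - cJ x) / norm (cJ x))"
      by (rule Lip[OF Gm Gn1 nzxm nzx(1)])
    also have "cJ (x - m) - cJ x = - cJ m" by (simp add: cJ_diff)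
    also have "Lc * (2 * norm (- cJ m) / norm (cJ x)) = 2 * (Lc * norm m) / norm x" by simp
    also have "\<dots> \<le> 2 * (Lc * Rb) / norm x"
      using mR Lc_pos xpos by (intro divide_right_mono mult_left_mono) auto
    also have "\<dots> \<le> (4 * Lc * Rb + 1) / norm x" using LR xpos by (intro divide_right_mono) (auto simp: mult.commute)
    finally show ?thesis by (simp add: norm_minus_commute)
  qed
  have b2: "norm (m' - n') \<le> (4 * Lc * Rb + 1) / norm x"
  proof -
    have "norm (m' - n') \<le> Lc * (2 * norm (cJ (y - m') - cJ y) / norm (cJ y))"
      by (rule Lip[OF Gm' Gn' nzym nzy])
    also have "cJ (y - m') - cJ y = - cJ m'" by (simp add: cJ_diff)
    also have "Lc * (2 * norm (- cJ m') / norm (cJ y)) = 2 * (Lc * norm m') / norm y" by simp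
    also have "\<dots> \<le> 2 * (Lc * Rb) / norm y"
      using mR' Lc_pos ypos by (intro divide_right_mono mult_left_mono) auto
    also have "\<dots> \<le> 2 * (Lc * Rb) / (norm x / 2)"
      using LR ypos y2 xpos by (intro divide_left_mono) auto
    also have "\<dots> = 4 * Lc * Rb / norm x" by simp
    also have "\<dots> \<le> (4 * Lc * Rb + 1) / norm x" using xpos by (intro divide_right_mono) auto
    finally show ?thesis .
  qed
  have b3: "norm (n' - np) \<le> (4 * Lc * Rb + 1) / norm x"
  proof -
    have "norm (n' - np) \<le> Lc * (2 * norm (cJ y - - cJ x) / norm (- cJ x))"
      by (rule Lip[OF Gn' Gnp nzy nzx(2)])
    also have "cJ y - - cJ x = cJ (2 *\<^sub>R m)" unfolding y_def by (simp add: cJ_diff)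
    also have "Lc * (2 * norm (cJ (2 *\<^sub>R m)) / norm (- cJ x)) = 4 * (Lc * norm m) / norm x" by simp
    also have "\<dots> \<le> 4 * (Lc * Rb) / norm x"
      using mR Lc_pos xpos by (intro divide_right_mono mult_left_mono) auto
    also have "\<dots> \<le> (4 * Lc * Rb + 1) / norm x" using xpos by (intro divide_right_mono) auto
    finally show ?thesis .
  qed
  show "let y = Tbil F M x in
        norm (n_minus F M x - m_minus F M x) \<le> (4 * Lc * Rb + 1) / norm x \<and>
        norm (m_minus F M y - n_minus F M y) \<le> (4 * Lc * Rb + 1) / norm x \<and>
        norm (n_minus F M y - n_plus F M x) \<le> (4 * Lc * Rb + 1) / norm x"
    unfolding ydef Let_def using b1 b2 b3 unfolding n1_def m_def m'_def n'_def np_def by simp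
qed

end


theorem lemma3p2:
  fixes F :: "'n::finite sp \<Rightarrow> real" and c :: real and M K :: "'n sp set"
  assumes "smooth F"
    and "pos_def_hessian F"
    and "M = {z. F z = c}"
    and "K = {z. F z \<le> c}"
    and "compact K" and "convex K" and "0 \<in> interior K"
    and "M = frontier K"
  shows "\<exists>C \<delta>. C > 0 \<and> \<delta> > 0 \<and>
    (\<forall>x. norm x \<ge> 1 / \<delta> \<longrightarrow>
      (let y = Tbil F M x in
        norm (n_minus F M x - m_minus F M x) \<le> C / norm x \<and>
        norm (m_minus F M y - n_minus F M y) \<le> C / norm x \<and>
        norm (n_minus F M y - n_plus F M x) \<le> C / norm x))"
proof -
  interpret S3 F c M K by (rule S3.intro) (rule assms)+
  show ?thesis by (rule main)
qed

end
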